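(* Let $M=(Q,P,\Sigma,\Delta,q_0,R,h)$ be a nondeleting mttr. Let $q\in Q$, $\sigma\in\Sigma^{(k)}$ with $k\ge 1$, $y\in Y$, and $p,p_1,\dots,p_k\in P$ such that $p=h_\sigma(p_1,\dots,p_k)$ and $L_{p_j}\neq\emptyset$ for every $j\in[k]$. Let $\zeta=\mathrm{rhs}_M(q,\sigma,\langle p_1,\dots,p_k\rangle)$. Suppose that $\mathrm{pout}_M((q,y),p)$ is finite and that a symbol $\langle r,x_i\rangle$ (with $i\in[k]$ and $r\in Q^{(m)}$) occurs in $\lfloor\zeta\rfloor_y$ at node $u$. Then for every $l\in[m]$ such that the node $ul$ of $\lfloor\zeta\rfloor_y$ is not labeled $\$$, the set $\mathrm{pout}_M((r,y_l),p_i)$ is finite.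
   Context: Trees: for a ranked alphabet $\Sigma$, $T_\Sigma$ is the set of finite ranked ordered trees over $\Sigma$, and $T_\Sigma(A)$ the trees over $\Sigma$ with additional rank-0 symbols from $A$. Nodes are addressed by Dewey paths: $\varepsilon$ is the root and $ui$ is the $i$-th child of $u$; $s[u]$ is the label and $s/u$ the subtree at $u$. $X_k=\{x_1,\dots,x_k\}$ are input variables and $Y=\{y_1,y_2,\dots\}$, $Y_m=\{y_1,\dots,y_m\}$ are parameters. A (deterministic bottom-up) tree automaton $(P,\Sigma,h)$ has a finite state set $P$ and maps $h_\sigma:P^k\to P$ for $\sigma\in\Sigma^{(k)}$; $\hat h:T_\Sigma\to P$ is its run, $\hat h(\sigma(s_1,\dots,s_k))=h_\sigma(\hat h(s_1),\dots,\hat h(s_k))$, and $L_p=\{s\in T_\Sigma\mid \hat h(s)=p\}$. A (total, deterministic) macro tree transducer with look-ahead (mttr) is $M=(Q,P,\Sigma,\Delta,q_0,R,h)$ where $Q$ is a ranked alphabet of states, $\Sigma,\Delta$ are ranked input/output alphabets, $(P,\Sigma,h)$ is a tree automaton (the look-ahead), $q_0\in Q^{(0)}$, and for each $q\in Q^{(m)}$, $\sigma\in\Sigma^{(k)}$, $p_1,\dots,p_k\in P$ there is exactly one rule $\langle q,\sigma(x_1:p_1,\dots,x_k:p_k)\rangle(y_1,\dots,y_m)\to t$ with $t=\mathrm{rhs}_M(q,\sigma,\langle p_1,\dots,p_k\rangle)\in T_{\Delta\cup\langle Q,X_k\rangle}(Y_m)$, where the symbol $\langle q',x_i\rangle$ has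 the rank of $q'$. For $q\in Q^{(m)}$ and $s=\sigma(s_1,\dots,s_k)\in T_\Sigma$, the $q$-translation $M_q(s)\in T_\Delta(Y_m)$ is obtained from $\mathrm{rhs}_M(q,\sigma,\langle \hat h(s_1),\dots,\hat h(s_k)\rangle)$ by replacing (recursively, innermost first) each subtree $\langle q',x_i\rangle(\xi_1,\dots,\xi_n)$ by $M_{q'}(s_i)$ with each $y_j$ replaced by (the result for) $\xi_j$; $M(s)=M_{q_0}(s)$. $M$ is nondeleting if in every rule with left-hand state of rank $m$ each parameter $y_1,\dots,y_m$ occurs in the right-hand side. Least common output form: for $Y'\subseteq Y$ and $s\in T_{\Delta\cup\langle Q,X\rangle}(Y)$, $\lfloor s\rfloor_{Y'}$ is the tree obtained from $s$ by replacing every maximal subtree containing no parameter from $Y'$ by a new rank-0 symbol $\$$ (i.e., $\lfloor y\rfloor_{Y'}=y$ for $y\in Y'$; $\lfloor\delta(s_1,\dots,s_n)\rfloor_{Y'}=\delta(\lfloor s_1\rfloor_{Y'},\dots,\lfloor s_n\rfloor_{Y'})$ if $s$ contains a parameter of $Y'$; otherwise $\$$). Write $\lfloor s\rfloor_y$ for $\lfloor s\rfloor_{\{y\}}$. For $q\in Q$, $p\in P$: $\mathrm{pout}_M((q,Y'),p)=\{\lfloor M_q(s)\rfloor_{Y'}\mid s\in L_p\}$ and $\mathrm{pout}_M((q,y),p)=\mathrm{pout}_M((q,\{y\}),p)$. *)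

theory Defs
  imports Main
begin

datatype 'a tree = Node 'a "'a tree list"

fun subtree_at :: "'a tree \<Rightarrow> nat list \<Rightarrow> 'a tree option" where
  "subtree_at t [] = Some t"
| "subtree_at (Node a ts) (i # u) =
     (if 1 \<le> i \<and> i \<le> length ts then subtree_at (ts ! (i - 1)) u else None)"

definition label_at :: "'a tree \<Rightarrow> nat list \<Rightarrow> 'a option" where
  "label_at t u = map_option (\<lambda>s. case s of Node a _ \<Rightarrow> a) (subtree_at t u)"

text \<open>Out g: output symbol; Call q i: the symbol <q, x_i>; Par j: parameter y_j;
  Dollar: the special rank-0 symbol used in least common output forms.\<close>
datatype ('q, 'g) rlab = Out 'g | Call 'q nat | Par nat | Dollar

record ('q, 'p, 'f, 'g) mttr =
  states :: "'q set"
  rkQ    :: "'q \<Rightarrow> nat"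
  lstates :: "'p set"
  inp    :: "'f set"
  rkI    :: "'f \<Rightarrow> nat"
  outp   :: "'g set"
  rkO    :: "'g \<Rightarrow> nat"
  init   :: 'q
  rhs    :: "'q \<Rightarrow> 'f \<Rightarrow> 'p list \<Rightarrow> ('q, 'g) rlab tree"
  la     :: "'f \<Rightarrow> 'p list \<Rightarrow> 'p"

text \<open>Right-hand sides: trees in T_{Delta \<union> <Q,X_k>}(Y_m).\<close>
fun wf_rhs :: "('q, 'p, 'f, 'g) mttr \<Rightarrow> nat \<Rightarrow> nat \<Rightarrow> ('q, 'g) rlab tree \<Rightarrow> bool" where
  "wf_rhs M k m (Node a ts) =
     ((case a of
         Out g \<Rightarrow> g \<in> outp M \<and> length ts = rkO M g
       | Call q i \<Rightarrow> q \<in> states M \<and> 1 \<le> i \<and> i \<le> k \<and> length ts = rkQ M q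
       | Par j \<Rightarrow> 1 \<le> j \<and> j \<le> m \<and> ts = []
       | Dollar \<Rightarrow> False)
      \<and> (\<forall>t \<in> set ts. wf_rhs M k m t))"

definition valid_la_args :: "('q, 'p, 'f, 'g) mttr \<Rightarrow> 'f \<Rightarrow> 'p list \<Rightarrow> bool" where
  "valid_la_args M \<sigma> ps \<longleftrightarrow> length ps = rkI M \<sigma> \<and> set ps \<subseteq> lstates M"

definition wf_mttr :: "('q, 'p, 'f, 'g) mttr \<Rightarrow> bool" where
  "wf_mttr M \<longleftrightarrow>
     finite (states M) \<and> finite (lstates M) \<and> finite (inp M) \<and> finite (outp M)
   \<and> init M \<in> states M \<and> rkQ M (init M) = 0
   \<and> (\<forall>\<sigma> \<in> inp M. \<forall>ps. valid_la_args M \<sigma> ps \<longrightarrow> la M \<sigma> ps \<in> lstates M)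
   \<and> (\<forall>q \<in> states M. \<forall>\<sigma> \<in> inp M. \<forall>ps. valid_la_args M \<sigma> ps \<longrightarrow>
         wf_rhs M (rkI M \<sigma>) (rkQ M q) (rhs M q \<sigma> ps))"

fun occurs_par :: "nat \<Rightarrow> ('q, 'g) rlab tree \<Rightarrow> bool" where
  "occurs_par j (Node a ts) = (a = Par j \<or> (\<exists>t \<in> set ts. occurs_par j t))"

definition nondeleting :: "('q, 'p, 'f, 'g) mttr \<Rightarrow> bool" where
  "nondeleting M \<longleftrightarrow>
     (\<forall>q \<in> states M. \<forall>\<sigma> \<in> inp M. \<forall>ps. valid_la_args M \<sigma> ps \<longrightarrow>
        (\<forall>j. 1 \<le> j \<and> j \<le> rkQ M q \<longrightarrow> occurs_par j (rhs M q \<sigma> ps)))"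

fun wf_in :: "('q, 'p, 'f, 'g) mttr \<Rightarrow> 'f tree \<Rightarrow> bool" where
  "wf_in M (Node \<sigma> ss) = (\<sigma> \<in> inp M \<and> length ss = rkI M \<sigma> \<and> (\<forall>s \<in> set ss. wf_in M s))"

primrec run :: "('q, 'p, 'f, 'g) mttr \<Rightarrow> 'f tree \<Rightarrow> 'p" where
  "run M (Node \<sigma> ss) = la M \<sigma> (map (run M) ss)"

definition Lang :: "('q, 'p, 'f, 'g) mttr \<Rightarrow> 'p \<Rightarrow> 'f tree set" where
  "Lang M p = {s. wf_in M s \<and> run M s = p}"

primrec psubst :: "('q, 'g) rlab tree list \<Rightarrow> ('q, 'g) rlab tree \<Rightarrow> ('q, 'g) rlab tree" where
  "psubst args (Node a ts) =
     (case a of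
        Par j \<Rightarrow> (if 1 \<le> j \<and> j \<le> length args then args ! (j - 1) else Node a (map (psubst args) ts))
      | _ \<Rightarrow> Node a (map (psubst args) ts))"

text \<open>Evaluate a right-hand side, given the translations of the children:
  tr q' i = M_{q'}(s_i).\<close>
primrec eval_rhs :: "('q \<Rightarrow> nat \<Rightarrow> ('q, 'g) rlab tree) \<Rightarrow> ('q, 'g) rlab tree \<Rightarrow> ('q, 'g) rlab tree" where
  "eval_rhs tr (Node a ts) =
     (case a of
        Call q' i \<Rightarrow> psubst (map (eval_rhs tr) ts) (tr q' i)
      | _ \<Rightarrow> Node a (map (eval_rhs tr) ts))"

primrec translate :: "('q, 'p, 'f, 'g) mttr \<Rightarrow> 'f tree \<Rightarrow> 'q \<Rightarrow> ('q, 'g) rlab tree" where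
  "translate M (Node \<sigma> ss) =
     (\<lambda>q. eval_rhs
            (\<lambda>q' i. if 1 \<le> i \<and> i \<le> length ss then (map (translate M) ss ! (i - 1)) q'
                    else Node Dollar [])
            (rhs M q \<sigma> (map (run M) ss)))"

fun has_par_in :: "nat set \<Rightarrow> ('q, 'g) rlab tree \<Rightarrow> bool" where
  "has_par_in Y' (Node a ts) = ((\<exists>j \<in> Y'. a = Par j) \<or> (\<exists>t \<in> set ts. has_par_in Y' t))"

fun lcof :: "nat set \<Rightarrow> ('q, 'g) rlab tree \<Rightarrow> ('q, 'g) rlab tree" where
  "lcof Y' (Node a ts) =
     (if has_par_in Y' (Node a ts) then Node a (map (lcof Y') ts) else Node Dollar [])"

definition pout :: "('q, 'p, 'f, 'g) mttr \<Rightarrow> 'q \<Rightarrow> nat set \<Rightarrow> 'p \<Rightarrow> ('q, 'g) rlab tree set" where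
  "pout M q Y' p = {lcof Y' (translate M s q) | s. s \<in> Lang M p}"

end

theory Submission imports Defs begin

fun good :: "('q,'g) rlab tree \<Rightarrow> bool" where
  "good (Node a ts) = ((\<forall>j. a = Par j \<longrightarrow> ts = []) \<and> (\<forall>t\<in>set ts. good t))"

lemma wf_rhs_good: "wf_rhs M k m z \<Longrightarrow> good z"
  by (induction z) (auto split: rlab.splits)

lemma psubst_good: "good t \<Longrightarrow> \<forall>a\<in>set args. good a \<Longrightarrow> good (psubst args t)"
  by (induction t) (auto split: rlab.splits)

definition trcond where
  "trcond M k tr \<longleftrightarrow> (\<forall>q'\<in>states M. \<forall>i'. 1 \<le> i' \<and> i' \<le> k \<longrightarrow> good (tr q' i') \<and>
      (\<forall>j. 1 \<le> j \<and> j \<le> rkQ M q' \<longrightarrow> has_par_in {j} (tr q' i')))"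

lemma eval_good: "wf_rhs M k m z \<Longrightarrow> (\<forall>q'\<in>states M. \<forall>i'. 1 \<le> i' \<and> i' \<le> k \<longrightarrow> good (tr q' i'))
  \<Longrightarrow> good (eval_rhs tr z)"
proof (induction z)
  case (Node a ts)
  then show ?case
    by (cases a) (auto intro!: psubst_good)
qed

lemma run_in: "wf_mttr M \<Longrightarrow> wf_in M s \<Longrightarrow> run M s \<in> lstates M"
proof (induction s)
  case (Node \<sigma> ss)
  have "set (map (run M) ss) \<subseteq> lstates M" using Node by auto
  then show ?case using Node.prems unfolding wf_mttr_def valid_la_args_def by auto
qed

lemma translate_good: "wf_mttr M \<Longrightarrow> wf_in M s \<Longrightarrow> q \<in> states M \<Longrightarrow> good (translate M s q)"
proof (induction s arbitrary: q)
  case (Node \<sigma> ss)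
  have v: "valid_la_args M \<sigma> (map (run M) ss)" using Node.prems run_in
    unfolding valid_la_args_def by fastforce
  have w: "wf_rhs M (rkI M \<sigma>) (rkQ M q) (rhs M q \<sigma> (map (run M) ss))"
    using Node.prems v unfolding wf_mttr_def by auto
  show ?case unfolding translate.simps
    apply (rule eval_good[OF w])
    using Node by auto
qed

lemma psubst_has: "good t \<Longrightarrow> has_par_in {j} t \<Longrightarrow> 1 \<le> j \<Longrightarrow> j \<le> length args \<Longrightarrow>
   has_par_in Y (args ! (j-1)) \<Longrightarrow> has_par_in Y (psubst args t)"
proof (induction t)
  case (Node a ts)
  show ?case
  proof (cases "a = Par j")
    case True then show ?thesis using Node.prems by simp
  next
    case False
    then obtain c where c: "c \<in> set ts" "has_par_in {j} c" using Node.prems by auto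
    then have "\<forall>j'. a \<noteq> Par j'" using Node.prems by auto
    then have "psubst args (Node a ts) = Node a (map (psubst args) ts)"
      by (cases a) auto
    then show ?thesis using Node c by fastforce
  qed
qed

lemma eval_has: "wf_rhs M k m z \<Longrightarrow> trcond M k tr \<Longrightarrow> has_par_in Y z \<Longrightarrow> has_par_in Y (eval_rhs tr z)"
proof (induction z)
  case (Node a ts)
  show ?case
  proof (cases a)
    case (Par j) then show ?thesis using Node.prems by auto
  next
    case (Out g)
    then obtain c where c: "c \<in> set ts" "has_par_in Y c" using Node.prems by auto
    then show ?thesis using Node Out by fastforce
  next
    case Dollar then show ?thesis using Node.prems by simp
  next
    case (Call q' i')
    then obtain n where n: "n < length ts" "has_par_in Y (ts!n)" using Node.prems
      by (auto simp: in_set_conv_nth)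
    have wq: "q' \<in> states M" "1 \<le> i'" "i' \<le> k" "length ts = rkQ M q'" using Node.prems Call by auto
    have "has_par_in Y (eval_rhs tr (ts!n))" using Node n
      by (metis nth_mem wf_rhs.simps)
    moreover have "good (tr q' i')" "has_par_in {Suc n} (tr q' i')"
      using Node.prems(2) wq n unfolding trcond_def by auto
    ultimately show ?thesis using Call n psubst_has[of "tr q' i'" "Suc n" "map (eval_rhs tr) ts" Y]
      by simp
  qed
qed

lemma oe: "occurs_par j t = has_par_in {j} t"
    by (induction t) auto

lemma translate_nd: "wf_mttr M \<Longrightarrow> nondeleting M \<Longrightarrow> wf_in M s \<Longrightarrow> q \<in> states M \<Longrightarrow>
   1 \<le> j \<Longrightarrow> j \<le> rkQ M q \<Longrightarrow> has_par_in {j} (translate M s q)"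
proof (induction s arbitrary: q j)
  case (Node \<sigma> ss)
  have v: "valid_la_args M \<sigma> (map (run M) ss)" using Node.prems run_in
    unfolding valid_la_args_def by fastforce
  have w: "wf_rhs M (rkI M \<sigma>) (rkQ M q) (rhs M q \<sigma> (map (run M) ss))"
    using Node.prems v unfolding wf_mttr_def by auto
  have o: "occurs_par j (rhs M q \<sigma> (map (run M) ss))"
    using Node.prems v unfolding nondeleting_def by auto
  have o2: "has_par_in {j} (rhs M q \<sigma> (map (run M) ss))" using o oe by metis
  show ?case unfolding translate.simps
    apply (rule eval_has[OF w _ o2])
    using Node translate_good[OF Node.prems(1)]
    by (auto simp: trcond_def)
qed

inductive emb :: "nat \<Rightarrow> ('q,'g) rlab tree \<Rightarrow> ('q,'g) rlab tree \<Rightarrow> bool" for l where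
  e1: "emb l (Node Dollar []) B"
| e2: "emb l (Node (Par l) []) B"
| e3: "length as = length bs \<Longrightarrow> (\<forall>n<length as. emb l (as!n) (bs!n)) \<Longrightarrow> emb l (Node a as) (Node a bs)"

lemma finite_lists_comp: "(\<forall>n<length bs. finite (F n)) \<Longrightarrow>
   finite {as. length as = length bs \<and> (\<forall>n<length as. as!n \<in> F n)}"
proof -
  assume h: "\<forall>n<length bs. finite (F n)"
  have "{as. length as = length bs \<and> (\<forall>n<length as. as!n \<in> F n)} \<subseteq>
        {as. set as \<subseteq> (\<Union>n<length bs. F n) \<and> length as = length bs}"
    by (auto simp: in_set_conv_nth) blast
  moreover have "finite {as. set as \<subseteq> (\<Union>n<length bs. F n) \<and> length as = length bs}"
    by (rule finite_lists_length_eq) (use h in auto)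
  ultimately show ?thesis by (rule finite_subset)
qed

lemma emb_finite: "finite {A. emb l A B}"
proof (induction B)
  case (Node b bs)
  let ?L = "{as. length as = length bs \<and> (\<forall>n<length as. as!n \<in> {A. emb l A (bs!n)})}"
  have "{A. emb l A (Node b bs)} \<subseteq> {Node Dollar [], Node (Par l) []} \<union> Node b ` ?L"
    by (auto elim: emb.cases)
  moreover have "finite ?L" by (rule finite_lists_comp) (use Node in auto)
  ultimately show ?case by (meson finite_Un finite_imageI finite_insert finite.emptyI finite_subset)
qed

lemma good_par: "good (Node a ts) \<Longrightarrow> ts \<noteq> [] \<Longrightarrow> \<forall>j. a \<noteq> Par j"
  by auto

lemma psubst_nonpar: "\<forall>j. a \<noteq> Par j \<Longrightarrow> psubst args (Node a ts) = Node a (map (psubst args) ts)"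
  by (cases a) auto

lemma lemA: "good t \<Longrightarrow> 1 \<le> l \<Longrightarrow> l \<le> length args \<Longrightarrow> has_par_in {y} (args!(l-1)) \<Longrightarrow>
   emb l (lcof {l} t) (lcof {y} (psubst args t))"
proof (induction t)
  case (Node a ts)
  show ?case
  proof (cases "has_par_in {l} (Node a ts)")
    case False then show ?thesis by (simp add: e1)
  next
    case True
    show ?thesis
    proof (cases "\<exists>j. a = Par j")
      case True2: True
      then obtain j where j: "a = Par j" by auto
      then have "ts = []" using Node.prems by auto
      then have "j = l" using True j by auto
      then show ?thesis using j `ts = []` True by (simp add: e2)
    next
      case False
      have ps: "psubst args (Node a ts) = Node a (map (psubst args) ts)"
        using False psubst_nonpar by blast
      have "has_par_in {y} (psubst args (Node a ts))"
        using psubst_has[OF Node.prems(1) True Node.prems(2-4)] .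
      then have "lcof {y} (psubst args (Node a ts)) = Node a (map (lcof {y} \<circ> psubst args) ts)"
        using ps by simp
      moreover have "lcof {l} (Node a ts) = Node a (map (lcof {l}) ts)" using True by simp
      ultimately show ?thesis using Node by (auto intro!: e3)
    qed
  qed
qed

lemma subtree_append: "subtree_at t (w @ v) = (case subtree_at t w of Some t' \<Rightarrow> subtree_at t' v | None \<Rightarrow> None)"
  by (induction t w rule: subtree_at.induct) auto

lemma lemC: "good t \<Longrightarrow> has_par_in {j} t \<Longrightarrow> 1 \<le> j \<Longrightarrow> j \<le> length args \<Longrightarrow>
   has_par_in Y (args ! (j-1)) \<Longrightarrow> \<exists>w. subtree_at (lcof Y (psubst args t)) w = Some (lcof Y (args!(j-1)))"
proof (induction t)
  case (Node a ts)
  show ?case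
  proof (cases "a = Par j")
    case True then show ?thesis using Node.prems by (intro exI[of _ "[]"]) simp
  next
    case False
    then obtain n where n: "n < length ts" "has_par_in {j} (ts!n)" using Node.prems
      by (auto simp: in_set_conv_nth)
    then have np: "\<forall>j'. a \<noteq> Par j'" using Node.prems by auto
    have ps: "psubst args (Node a ts) = Node a (map (psubst args) ts)"
      using np psubst_nonpar by blast
    have "has_par_in Y (psubst args (Node a ts))"
      using psubst_has[OF Node.prems] .
    then have l: "lcof Y (psubst args (Node a ts)) = Node a (map (lcof Y \<circ> psubst args) ts)"
      using ps by simp
    obtain w where "subtree_at (lcof Y (psubst args (ts!n))) w = Some (lcof Y (args!(j-1)))"
      using Node.IH[of "ts!n"] n Node.prems by auto
    then show ?thesis using l n by (intro exI[of _ "Suc n # w"]) simp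
  qed
qed

lemma lcof_nohas: "\<not> has_par_in Y t \<Longrightarrow> lcof Y t = Node Dollar []"
  by (cases t) auto

lemma lemB: "wf_rhs M k m z \<Longrightarrow> trcond M k tr \<Longrightarrow>
   subtree_at (lcof {y} z) u = Some (Node (Call r i) cs) \<Longrightarrow>
   label_at (lcof {y} z) (u @ [l]) \<noteq> Some Dollar \<Longrightarrow> 1 \<le> l \<Longrightarrow> l \<le> rkQ M r \<Longrightarrow>
   \<exists>v B. subtree_at (lcof {y} (eval_rhs tr z)) v = Some B \<and> emb l (lcof {l} (tr r i)) B"
proof (induction z arbitrary: u)
  case (Node a ts)
  have hz: "has_par_in {y} (Node a ts)"
  proof (rule ccontr)
    assume "\<not> ?thesis"
    then have "lcof {y} (Node a ts) = Node Dollar []" by (rule lcof_nohas)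
    then show False using Node.prems(3) by (cases u) (auto simp del: lcof.simps split: if_splits)
  qed
  then have lz: "lcof {y} (Node a ts) = Node a (map (lcof {y}) ts)" by simp
  show ?case
  proof (cases u)
    case Nil
    then have a: "a = Call r i" using Node.prems(3) lz by simp
    then have wq: "r \<in> states M" "1 \<le> i" "i \<le> k" "length ts = rkQ M r" using Node.prems(1) by auto
    have hl: "has_par_in {y} (ts!(l-1))"
    proof (rule ccontr)
      assume "\<not> ?thesis"
      then have "lcof {y} (ts!(l-1)) = Node Dollar []" by (rule lcof_nohas)
      then show False using Node.prems(4-6) Nil lz wq by (simp add: label_at_def)
    qed
    have "has_par_in {y} (eval_rhs tr (ts!(l-1)))"
      by (rule eval_has[OF _ Node.prems(2) hl]) (use Node.prems wq a in auto)
    moreover have "good (tr r i)" using Node.prems(2) wq unfolding trcond_def by auto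
    ultimately have "emb l (lcof {l} (tr r i)) (lcof {y} (psubst (map (eval_rhs tr) ts) (tr r i)))"
      using lemA[of "tr r i" l "map (eval_rhs tr) ts" y] Node.prems wq by simp
    then show ?thesis using a by (intro exI[of _ "[]"]) auto
  next
    case (Cons n u')
    have n: "1 \<le> n" "n \<le> length ts" and
      st: "subtree_at (lcof {y} (ts!(n-1))) u' = Some (Node (Call r i) cs)" and
      lb: "label_at (lcof {y} (ts!(n-1))) (u' @ [l]) \<noteq> Some Dollar"
      using Node.prems(3,4) Cons lz by (auto simp: label_at_def split: if_splits)
    have mem: "ts!(n-1) \<in> set ts" using n by auto
    have wc: "wf_rhs M k m (ts!(n-1))" using Node.prems(1) mem by (cases a) auto
    obtain v' B where vB: "subtree_at (lcof {y} (eval_rhs tr (ts!(n-1)))) v' = Some B"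
      "emb l (lcof {l} (tr r i)) B"
      using Node.IH[OF mem wc Node.prems(2) st lb Node.prems(5,6)] by blast
    have hc: "has_par_in {y} (ts!(n-1))"
    proof (rule ccontr)
      assume "\<not> ?thesis"
      then have "lcof {y} (ts!(n-1)) = Node Dollar []" by (rule lcof_nohas)
      then show False using st by (cases u') (auto simp del: lcof.simps split: if_splits)
    qed
    have he: "has_par_in {y} (eval_rhs tr (ts!(n-1)))"
      by (rule eval_has[OF wc Node.prems(2) hc])
    show ?thesis
    proof (cases a)
      case (Call q' i')
      then have wq: "q' \<in> states M" "1 \<le> i'" "i' \<le> k" "length ts = rkQ M q'"
        using Node.prems(1) by auto
      have g: "good (tr q' i')" "has_par_in {n} (tr q' i')"
        using Node.prems(2) wq n unfolding trcond_def by auto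
      obtain w where w: "subtree_at (lcof {y} (psubst (map (eval_rhs tr) ts) (tr q' i'))) w
          = Some (lcof {y} (map (eval_rhs tr) ts ! (n-1)))"
        using lemC[OF g(1) g(2) n(1), of "map (eval_rhs tr) ts" "{y}"] n he by auto
      show ?thesis using w vB Call n
        by (intro exI[of _ "w @ v'"] exI[of _ B]) (auto simp: subtree_append)
    next
      case (Par j) then show ?thesis using Node.prems(1) n by auto
    next
      case Dollar then show ?thesis using Node.prems(1) by auto
    next
      case (Out g)
      have "has_par_in {y} (eval_rhs tr (Node a ts))" using Out he mem by auto
      then have "lcof {y} (eval_rhs tr (Node a ts)) = Node a (map (lcof {y} \<circ> eval_rhs tr) ts)"
        using Out by simp
      then show ?thesis using vB n
        by (intro exI[of _ "n # v'"] exI[of _ B]) auto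
    qed
  qed
qed

definition subtrees :: "'a tree \<Rightarrow> 'a tree set" where
  "subtrees T = {B. \<exists>v. subtree_at T v = Some B}"

lemma subtrees_finite: "finite (subtrees T)"
proof (induction T)
  case (Node a ts)
  have "subtrees (Node a ts) \<subseteq> insert (Node a ts) (\<Union>t\<in>set ts. subtrees t)"
  proof
    fix B assume "B \<in> subtrees (Node a ts)"
    then obtain v where v: "subtree_at (Node a ts) v = Some B" unfolding subtrees_def by auto
    show "B \<in> insert (Node a ts) (\<Union>t\<in>set ts. subtrees t)"
    proof (cases v)
      case Nil then show ?thesis using v by simp
    next
      case (Cons n v')
      then have "1 \<le> n" "n \<le> length ts" "subtree_at (ts!(n-1)) v' = Some B"
        using v by (auto split: if_splits)
      then show ?thesis unfolding subtrees_def
        by (intro insertI2 UN_I[of "ts!(n-1)"]) auto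
    qed
  qed
  moreover have "finite (insert (Node a ts) (\<Union>t\<in>set ts. subtrees t))" using Node by auto
  ultimately show ?case by (rule finite_subset)
qed

theorem mainTheorem1:
  fixes M :: "('q, 'p, 'f, 'g) mttr"
    and q r :: 'q and \<sigma> :: 'f and y i l k :: nat and p :: 'p and ps :: "'p list"
    and u :: "nat list"
  assumes "wf_mttr M"
    and "nondeleting M"
    and "q \<in> states M"
    and "\<sigma> \<in> inp M" and "rkI M \<sigma> = k" and "k \<ge> 1"
    and "length ps = k" and "set ps \<subseteq> lstates M"
    and "y \<ge> 1"
    and "p = la M \<sigma> ps"
    and "\<forall>j < k. Lang M (ps ! j) \<noteq> {}"
    and "finite (pout M q {y} p)"
    and "1 \<le> i" and "i \<le> k" and "r \<in> states M"
    and "label_at (lcof {y} (rhs M q \<sigma> ps)) u = Some (Call r i)"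
    and "1 \<le> l" and "l \<le> rkQ M r"
    and "label_at (lcof {y} (rhs M q \<sigma> ps)) (u @ [l]) \<noteq> Some Dollar"
  shows "finite (pout M r {l} (ps ! (i - 1)))"
proof -
  have "\<forall>j<k. \<exists>s. s \<in> Lang M (ps!j)" using assms(11) by auto
  then obtain sel where sel: "\<forall>j<k. sel j \<in> Lang M (ps!j)" by metis
  obtain cs where cs: "subtree_at (lcof {y} (rhs M q \<sigma> ps)) u = Some (Node (Call r i) cs)"
    using assms(16) unfolding label_at_def
    by (cases "subtree_at (lcof {y} (rhs M q \<sigma> ps)) u") (auto split: tree.splits)
  have va: "valid_la_args M \<sigma> ps" using assms unfolding valid_la_args_def by auto
  have wr: "wf_rhs M k (rkQ M q) (rhs M q \<sigma> ps)"
    using assms(1,3,4,5) va unfolding wf_mttr_def by auto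
  have sub: "pout M r {l} (ps ! (i - 1)) \<subseteq>
     (\<Union>T\<in>pout M q {y} p. \<Union>B\<in>subtrees T. {A. emb l A B})"
  proof
    fix A assume "A \<in> pout M r {l} (ps ! (i - 1))"
    then obtain s' where s': "s' \<in> Lang M (ps!(i-1))" "A = lcof {l} (translate M s' r)"
      unfolding pout_def by auto
    define ss where "ss = (map sel [0..<k])[i-1 := s']"
    have lss: "length ss = k" unfolding ss_def by simp
    have ssL: "\<forall>j<k. ss!j \<in> Lang M (ps!j)" unfolding ss_def using sel s' assms(13,14)
      by (auto simp: nth_list_update)
    have rss: "map (run M) ss = ps"
      by (rule nth_equalityI) (use lss assms(7) ssL in \<open>auto simp: Lang_def\<close>)
    have "Node \<sigma> ss \<in> Lang M p" using assms(4,5,10) lss ssL rss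
      unfolding Lang_def by (auto simp: in_set_conv_nth)
    define tr where "tr = (\<lambda>q' i. if 1 \<le> i \<and> i \<le> length ss then (map (translate M) ss ! (i - 1)) q'
                    else Node Dollar [])"
    have tq: "translate M (Node \<sigma> ss) q = eval_rhs tr (rhs M q \<sigma> ps)"
      using rss unfolding tr_def by simp
    have wfss: "\<forall>j<k. wf_in M (ss!j)" using ssL unfolding Lang_def by auto
    have tc: "trcond M k tr" unfolding trcond_def tr_def
      using wfss lss translate_good[OF assms(1)] translate_nd[OF assms(1,2)] by auto
    have tri: "tr r i = translate M s' r" unfolding tr_def ss_def using assms(13,14) by simp
    obtain v B where vB: "subtree_at (lcof {y} (eval_rhs tr (rhs M q \<sigma> ps))) v = Some B"
      "emb l (lcof {l} (tr r i)) B"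
      using lemB[OF wr tc cs assms(19,17,18)] by blast
    show "A \<in> (\<Union>T\<in>pout M q {y} p. \<Union>B\<in>subtrees T. {A. emb l A B})"
      using vB tri tq s'(2) \<open>Node \<sigma> ss \<in> Lang M p\<close> unfolding pout_def subtrees_def by fastforce
  qed
  show ?thesis
    by (rule finite_subset[OF sub]) (use assms(12) subtrees_finite emb_finite in auto)
qed

end
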